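(* Let $\{\Theta_{kj}\}_{k,j\in[K]}$ be i.i.d. uniform on $[-\pi,\pi)$. For $\mathbf{P}\in[0,1]^K$ and $(\boldsymbol{\alpha},\boldsymbol{\gamma})\in[-\pi,\pi)^{2K}$ let $\beta_{kj}=\cos^2(\alpha_j+\Theta_{kj}-\Theta_{jj}-\gamma_k)$ and $R_{sum}(\mathbf{P},\boldsymbol{\alpha},\boldsymbol{\gamma})=\sum_{k=1}^K\ln\!\left(1+\frac{P_k\beta_{kk}}{\sum_{j\ne k}P_j\beta_{kj}+\frac12}\right)$. For any fixed (non-random) $\mathcal{S}\subset[K]$ with $|\mathcal{S}|=s$, any fixed $(\boldsymbol{\alpha},\boldsymbol{\gamma})\in[-\pi,\pi)^{2K}$, and any real $r$, $$\mathbb{P}\left[R_{sum}(\mathbf{1}_{\mathcal{S}},\boldsymbol{\alpha},\boldsymbol{\gamma})>r\right]\le e^{-\left(\frac{r}{32}-1\right)s},$$ where $\mathbf{1}_{\mathcal{S}}\in\{0,1\}^K$ has $k$-th component $1$ if $k\in\mathcal{S}$ and $0$ otherwise.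
   Context: The probability is over the random phases $\{\Theta_{kj}\}$. *)

theory Defs
  imports "HOL-Probability.Probability"
begin

text \<open>Indices [K] are rendered as {0..<K}. Phases Theta are a function on pairs (k,j).\<close>

definition beta :: "(nat \<Rightarrow> real) \<Rightarrow> (nat \<Rightarrow> real) \<Rightarrow> (nat \<times> nat \<Rightarrow> real) \<Rightarrow> nat \<Rightarrow> nat \<Rightarrow> real" where
  "beta \<alpha> \<gamma> \<Theta> k j = (cos (\<alpha> j + \<Theta> (k, j) - \<Theta> (j, j) - \<gamma> k))\<^sup>2"

definition Rsum :: "nat \<Rightarrow> (nat \<Rightarrow> real) \<Rightarrow> (nat \<Rightarrow> real) \<Rightarrow> (nat \<Rightarrow> real) \<Rightarrow> (nat \<times> nat \<Rightarrow> real) \<Rightarrow> real" where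
  "Rsum K P \<alpha> \<gamma> \<Theta> =
     (\<Sum>k<K. ln (1 + P k * beta \<alpha> \<gamma> \<Theta> k k /
        ((\<Sum>j\<in>{..<K} - {k}. P j * beta \<alpha> \<gamma> \<Theta> k j) + 1/2)))"

definition phase_space :: "nat \<Rightarrow> (nat \<times> nat \<Rightarrow> real) measure" where
  "phase_space K = PiM ({..<K} \<times> {..<K}) (\<lambda>_. uniform_measure lborel {-pi..<pi})"

definition ind_vec :: "nat set \<Rightarrow> nat \<Rightarrow> real" where
  "ind_vec S k = (if k \<in> S then 1 else 0)"

end

theory Submission
  imports Defs
begin


abbreviation U :: "real measure" where "U \<equiv> uniform_measure lborel {-pi..<pi}"

lemma emeasure_U_dom: "emeasure lborel {-pi..<pi} = ennreal (2*pi)"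
  by simp

lemma prob_U: "prob_space U"
  by (rule prob_space_uniform_measure) auto

lemma exp_bound: fixes x::real assumes "0 \<le> x" "x \<le> 1" shows "exp (-x) \<le> 1 - x/2"
proof -
  have "1 + x \<le> exp x" by (rule exp_ge_add_one_self)
  hence "exp (-x) \<le> 1/(1+x)" using assms by (simp add: exp_minus field_simps)
  also have "\<dots> \<le> 1 - x/2" using assms using mult_right_le_one_le[of x x] by (simp add: field_simps)
  finally show ?thesis .
qed

lemma cos_sq_eq: "(cos (t::real))\<^sup>2 = (1 + cos (2*t))/2"
  by (simp add: cos_double) (smt (verit) sin_cos_squared_add)

lemma single_bound: "(\<integral>\<^sup>+\<theta>. ennreal (exp (-(cos (\<theta> + c))\<^sup>2)) \<partial>U) \<le> ennreal (3/4)"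
proof -
  define f where "f = (\<lambda>\<theta>::real. 3/4 - cos (2*(\<theta>+c))/4)"
  define F where "F = (\<lambda>\<theta>::real. 3*\<theta>/4 - sin (2*(\<theta>+c))/8)"
  have fb[measurable]: "f \<in> borel_measurable borel" unfolding f_def by measurable
  have le: "exp (-(cos (\<theta> + c))\<^sup>2) \<le> f \<theta>" for \<theta>
  proof -
    have "exp (-(cos (\<theta> + c))\<^sup>2) \<le> 1 - (cos (\<theta> + c))\<^sup>2/2"
      by (rule exp_bound) (auto simp: abs_square_le_1)
    also have "\<dots> = f \<theta>" unfolding f_def cos_sq_eq by (simp add: field_simps)
    finally show ?thesis .
  qed
  have fnn: "0 \<le> f x" for x unfolding f_def using cos_le_one[of "2*(x+c)"] by linarith
  have D: "DERIV F x :> f x" for x unfolding F_def f_def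
    by (auto intro!: derivative_eq_intros)
  have I: "(\<integral>\<^sup>+\<theta>. ennreal (f \<theta>) * indicator {-pi..<pi} \<theta> \<partial>lborel) \<le> ennreal (3*pi/2)"
  proof -
    have "(\<integral>\<^sup>+\<theta>. ennreal (f \<theta>) * indicator {-pi..<pi} \<theta> \<partial>lborel) \<le> (\<integral>\<^sup>+\<theta>. ennreal (f \<theta>) * indicator {-pi..pi} \<theta> \<partial>lborel)"
      by (intro nn_integral_mono) (auto split: split_indicator)
    also have "\<dots> = ennreal (F pi - F (-pi))"
      using nn_integral_FTC_Icc[OF fb, where F=F and a="-pi" and b=pi] D fnn by simp
    also have "F pi - F (-pi) = 3*pi/2"
    proof -
      have "sin (2*(pi+c)) = sin (2*c)" by (simp add: distrib_left sin_add sin_diff)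
      moreover have "sin (2*(-pi+c)) = sin (2*c)" by (simp add: distrib_left sin_add sin_diff)
      ultimately show ?thesis unfolding F_def by simp
    qed
    finally show ?thesis .
  qed
  have "(\<integral>\<^sup>+\<theta>. ennreal (exp (-(cos (\<theta> + c))\<^sup>2)) \<partial>U) \<le> (\<integral>\<^sup>+\<theta>. ennreal (f \<theta>) \<partial>U)"
    by (intro nn_integral_mono ennreal_leI le)
  also have "\<dots> = (\<integral>\<^sup>+\<theta>. ennreal (f \<theta>) * indicator {-pi..<pi} \<theta> \<partial>lborel) / ennreal (2*pi)"
    by (subst nn_integral_uniform_measure) auto
  also have "\<dots> \<le> ennreal (3*pi/2) / ennreal (2*pi)"
    by (rule divide_right_mono_ennreal[OF I])
  also have "\<dots> = ennreal (3/4)" by (subst divide_ennreal) auto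
  finally show ?thesis .
qed


interpretation PS: product_sigma_finite "\<lambda>_::nat\<times>nat. U"
  unfolding product_sigma_finite_def
  using prob_U prob_space_imp_sigma_finite by blast

lemma prob_PiU: "prob_space (PiM J (\<lambda>_::nat\<times>nat. U))"
  by (rule prob_space_PiM) (rule prob_U)

lemma sets_U[simp]: "sets U = sets borel"
  by simp

lemma comp_meas:
  assumes "q \<in> J"
  shows "(\<lambda>\<Theta>. \<Theta> q) \<in> borel_measurable (PiM J (\<lambda>_::nat\<times>nat. U))"
proof -
  have "(\<lambda>\<Theta>. \<Theta> q) \<in> measurable (PiM J (\<lambda>_::nat\<times>nat. U)) U"
    using measurable_component_singleton[OF assms] by blast
  thus ?thesis using measurable_cong_sets[OF refl sets_U] by blast
qed

lemma prod_meas: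
  assumes "P \<subseteq> J" "\<And>p. p \<in> P \<Longrightarrow> (snd p, snd p) \<in> J"
  shows "(\<lambda>\<Theta>. ennreal (\<Prod>p\<in>P. exp (- beta \<alpha> \<gamma> \<Theta> (fst p) (snd p)))) \<in> borel_measurable (PiM J (\<lambda>_::nat\<times>nat. U))"
proof -
  have "(\<lambda>\<Theta>. exp (- beta \<alpha> \<gamma> \<Theta> (fst p) (snd p))) \<in> borel_measurable (PiM J (\<lambda>_::nat\<times>nat. U))"
    if "p \<in> P" for p
  proof -
    have m1: "(\<lambda>\<Theta>. \<Theta> (fst p, snd p)) \<in> borel_measurable (PiM J (\<lambda>_::nat\<times>nat. U))"
      using comp_meas[of p J] that assms by auto
    have m2: "(\<lambda>\<Theta>. \<Theta> (snd p, snd p)) \<in> borel_measurable (PiM J (\<lambda>_::nat\<times>nat. U))"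
      using comp_meas[of "(snd p, snd p)" J] that assms by auto
    note m1[measurable] m2[measurable]
    show ?thesis unfolding beta_def by measurable
  qed
  hence "(\<lambda>\<Theta>. \<Prod>p\<in>P. exp (- beta \<alpha> \<gamma> \<Theta> (fst p) (snd p))) \<in> borel_measurable (PiM J (\<lambda>_::nat\<times>nat. U))"
    by (rule borel_measurable_prod)
  thus ?thesis by (rule measurable_compose[OF _ measurable_ennreal])
qed

lemma prod_bound:
  assumes P: "P \<subseteq> {p \<in> {..<K}\<times>{..<K}. fst p \<noteq> snd p}"
  shows "(\<integral>\<^sup>+\<Theta>. ennreal (\<Prod>p\<in>P. exp (- beta \<alpha> \<gamma> \<Theta> (fst p) (snd p))) \<partial>phase_space K) \<le> ennreal ((3/4)^card P)"
proof -
  define D where "D = {p \<in> {..<K}\<times>{..<K}. fst p = snd p}"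
  define Od where "Od = {p \<in> {..<K}\<times>{..<K}. fst p \<noteq> snd p}"
  have IDO: "{..<K}\<times>{..<K} = D \<union> Od" unfolding D_def Od_def by auto
  have disj: "D \<inter> Od = {}" unfolding D_def Od_def by auto
  have fD: "finite D" "finite Od" unfolding D_def Od_def by auto
  have PO: "P \<subseteq> Od" using P unfolding Od_def .
  have fP: "finite P" using PO fD finite_subset by blast
  have diagD: "(snd p, snd p) \<in> D" if "p \<in> P" for p using that PO unfolding D_def Od_def by auto
  define g where "g = (\<lambda>\<Theta>. ennreal (\<Prod>p\<in>P. exp (- beta \<alpha> \<gamma> \<Theta> (fst p) (snd p))))"
  have gm: "g \<in> borel_measurable (PiM (D \<union> Od) (\<lambda>_::nat\<times>nat. U))"
    unfolding g_def by (rule prod_meas) (use PO diagD in auto)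
  define h where "h = (\<lambda>x p t. ennreal (exp (- (cos (t + (\<alpha> (snd p) - x (snd p, snd p) - \<gamma> (fst p))))\<^sup>2)))"
  have hm: "h x p \<in> borel_measurable U" for x p
  proof -
    have "h x p \<in> borel_measurable borel" unfolding h_def by measurable
    thus ?thesis using measurable_cong_sets[OF sets_U refl] by blast
  qed
  have inner: "(\<integral>\<^sup>+y. g (merge D Od (x, y)) \<partial>PiM Od (\<lambda>_. U)) \<le> ennreal ((3/4)^card P)" for x
  proof -
    have "g (merge D Od (x, y)) = (\<Prod>p\<in>Od. (if p \<in> P then h x p else (\<lambda>_. 1)) (y p))" for y
    proof -
      have eqp: "exp (- beta \<alpha> \<gamma> (merge D Od (x, y)) (fst p) (snd p)) = exp (- (cos (y p + (\<alpha> (snd p) - x (snd p, snd p) - \<gamma> (fst p))))\<^sup>2)"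
        if p: "p \<in> P" for p
      proof -
        have mO: "merge D Od (x, y) (fst p, snd p) = y p" using p PO disj by auto
        have mD: "merge D Od (x, y) (snd p, snd p) = x (snd p, snd p)" using diagD[OF p] by (simp add: merge_def)
        have "\<alpha> (snd p) + merge D Od (x, y) (fst p, snd p) - merge D Od (x, y) (snd p, snd p) - \<gamma> (fst p)
              = y p + (\<alpha> (snd p) - x (snd p, snd p) - \<gamma> (fst p))"
          unfolding mO mD by simp
        note e = this
        show ?thesis unfolding beta_def e by (rule refl)
      qed
      have "g (merge D Od (x, y)) = (\<Prod>p\<in>P. h x p (y p))"
        unfolding g_def h_def
        by (subst prod_ennreal[symmetric]) (auto simp: eqp)
      also have "\<dots> = (\<Prod>p\<in>Od. (if p \<in> P then h x p else (\<lambda>_. 1)) (y p))"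
        by (rule prod.mono_neutral_cong_left) (use fD PO in auto)
      finally show ?thesis .
    qed
    hence "(\<integral>\<^sup>+y. g (merge D Od (x, y)) \<partial>PiM Od (\<lambda>_. U)) = (\<integral>\<^sup>+y. (\<Prod>p\<in>Od. (if p \<in> P then h x p else (\<lambda>_. 1)) (y p)) \<partial>PiM Od (\<lambda>_. U))"
      by simp
    also have "\<dots> = (\<Prod>p\<in>Od. integral\<^sup>N U (if p \<in> P then h x p else (\<lambda>_. 1)))"
      by (rule PS.product_nn_integral_prod) (use fD hm in auto)
    also have "\<dots> = (\<Prod>p\<in>P. integral\<^sup>N U (h x p))"
      apply (rule prod.mono_neutral_cong_right)
      using fD PO by (auto simp: nn_integral_const prob_space.emeasure_space_1[OF prob_U])
    also have "\<dots> \<le> (\<Prod>p\<in>P. ennreal (3/4))"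
      by (rule prod_mono_ennreal) (unfold h_def, rule single_bound)
    also have "\<dots> = ennreal ((3/4)^card P)"
      by (simp add: ennreal_power)
    finally show ?thesis .
  qed
  have "(\<integral>\<^sup>+\<Theta>. g \<Theta> \<partial>phase_space K) = (\<integral>\<^sup>+\<Theta>. g \<Theta> \<partial>PiM (D \<union> Od) (\<lambda>_. U))"
    unfolding phase_space_def IDO ..
  also have "\<dots> = (\<integral>\<^sup>+x. (\<integral>\<^sup>+y. g (merge D Od (x, y)) \<partial>PiM Od (\<lambda>_. U)) \<partial>PiM D (\<lambda>_. U))"
    by (rule PS.product_nn_integral_fold) (use disj fD gm in auto)
  also have "\<dots> \<le> (\<integral>\<^sup>+x. ennreal ((3/4)^card P) \<partial>PiM D (\<lambda>_. U))"
    by (rule nn_integral_mono) (rule inner)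
  also have "\<dots> = ennreal ((3/4)^card P)"
    using prob_space.emeasure_space_1[OF prob_PiU] by simp
  finally show ?thesis unfolding g_def .
qed



lemma beta_bounds: "0 \<le> beta \<alpha> \<gamma> \<Theta> k j" "beta \<alpha> \<gamma> \<Theta> k j \<le> 1"
  unfolding beta_def by (auto simp: abs_square_le_1)

lemma T_bounds:
  fixes I b :: real
  assumes "0 \<le> I" "0 \<le> b" "b \<le> 1"
  shows "0 \<le> ln (1 + b/(I+1/2))" "ln (1 + b/(I+1/2)) \<le> 1/(I+1/2)"
proof -
  have p: "0 \<le> b/(I+1/2)" using assms by simp
  thus "0 \<le> ln (1 + b/(I+1/2))" by simp
  have "ln (1 + b/(I+1/2)) \<le> b/(I+1/2)" by (rule ln_add_one_self_le_self[OF p])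
  also have "\<dots> \<le> 1/(I+1/2)" using assms by (simp add: divide_right_mono)
  finally show "ln (1 + b/(I+1/2)) \<le> 1/(I+1/2)" .
qed

lemma row_bound:
  fixes I b s :: real
  assumes "0 \<le> I" "0 \<le> b" "b \<le> 1" "0 \<le> s"
  shows "exp ((s/32) * ln (1 + b/(I+1/2))) \<le> exp (3 * s / 16) * exp (-I) + exp (1/4)"
proof -
  define t where "t = ln (1 + b/(I+1/2))"
  have t0: "0 \<le> t" and t1: "t \<le> 1/(I+1/2)" using T_bounds[OF assms(1-3)] unfolding t_def by auto
  have t2: "t \<le> 2"
  proof -
    have "1/(I+1/2) \<le> 2" using assms(1) by (simp add: field_simps)
    thus ?thesis using t1 by linarith
  qed
  show ?thesis
  proof (cases "I \<ge> s/8")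
    case True
    have "(s/32) * t \<le> (s/32) * (1/(I+1/2))" by (rule mult_left_mono[OF t1]) (simp add: assms(4))
    also have "\<dots> \<le> 1/4" using True assms by (simp add: field_simps)
    finally have "exp ((s/32) * t) \<le> exp (1/4)" by simp
    moreover have "0 \<le> exp (3 * s / 16) * exp (-I)" by simp
    ultimately show ?thesis unfolding t_def by linarith
  next
    case False
    have "(s/32) * t \<le> (s/32) * 2" using t2 assms(4) by (simp add: mult_left_mono)
    also have "\<dots> \<le> 3 * s / 16 + (-I)" using False by simp
    finally have "exp ((s/32) * t) \<le> exp (3 * s / 16 + (-I))" by simp
    also have "\<dots> = exp (3 * s / 16) * exp (-I)" by (rule exp_add)
    finally show ?thesis unfolding t_def by (smt (verit) exp_gt_zero)
  qed
qed

lemma numeric: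
  assumes "17 \<le> s"
  shows "exp (3*real s/16) * (3/4)^(s-1) + exp (1/4) \<le> exp 1"
proof -
  have e1: "exp (3/16::real) \<le> 16/13"
  proof -
    have "1 - 3/16 \<le> exp (-(3/16::real))" using exp_ge_add_one_self[of "-(3/16::real)"] by simp
    hence "(13/16) * exp (3/16::real) \<le> 1" by (simp add: exp_minus field_simps)
    thus ?thesis by simp
  qed
  have e2: "exp (1/4::real) \<le> 4/3"
  proof -
    have "1 - 1/4 \<le> exp (-(1/4::real))" using exp_ge_add_one_self[of "-(1/4::real)"] by simp
    hence "(3/4) * exp (1/4::real) \<le> 1" by (simp add: exp_minus field_simps)
    thus ?thesis by simp
  qed
  have "exp (3*real s/16) = exp (3/16) ^ s" using exp_of_nat_mult[of s "3/16::real"] by (simp add: field_simps)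
  also have "\<dots> \<le> (16/13) ^ s" by (rule power_mono[OF e1]) simp
  finally have a: "exp (3*real s/16) \<le> (16/13) ^ s" .
  have "exp (3*real s/16) * (3/4)^(s-1) \<le> (16/13) ^ s * (3/4)^(s-1)"
    by (rule mult_right_mono[OF a]) simp
  also have "\<dots> = (4/3) * (12/13::real)^s"
  proof -
    obtain m where m: "s = Suc m" using assms by (cases s) auto
    show ?thesis unfolding m by (simp add: power_mult_distrib[symmetric] field_simps)
  qed
  also have "\<dots> \<le> (4/3) * (12/13::real)^17"
    by (intro mult_left_mono power_decreasing assms) auto
  also have "\<dots> \<le> 2/3" by (simp add: power_divide)
  finally have "exp (3*real s/16) * (3/4)^(s-1) + exp (1/4) \<le> 2" using e2 by linarith
  also have "2 \<le> exp (1::real)" using exp_ge_add_one_self[of "1::real"] by simp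
  finally show ?thesis .
qed

lemma expand:
  fixes G :: "'a \<Rightarrow> real" and C a :: real
  assumes "finite S"
  shows "(\<Prod>k\<in>S. C * G k + a) = (\<Sum>B\<in>Pow S. C ^ card B * a ^ card (S - B) * (\<Prod>k\<in>B. G k))"
proof -
  have "(\<Prod>k\<in>S. C * G k + a) = (\<Sum>B\<in>Pow S. (\<Prod>k\<in>B. C * G k) * (\<Prod>k\<in>S-B. a))"
    by (rule prod_add[OF assms])
  also have "\<dots> = (\<Sum>B\<in>Pow S. C ^ card B * a ^ card (S - B) * (\<Prod>k\<in>B. G k))"
    by (intro sum.cong refl) (simp add: prod.distrib)
  finally show ?thesis .
qed

lemma Rsum_S:
  assumes "S \<subseteq> {..<K}"
  shows "Rsum K (ind_vec S) \<alpha> \<gamma> \<Theta> =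
    (\<Sum>k\<in>S. ln (1 + beta \<alpha> \<gamma> \<Theta> k k / ((\<Sum>j\<in>S-{k}. beta \<alpha> \<gamma> \<Theta> k j) + 1/2)))"
proof -
  have inner: "(\<Sum>j\<in>{..<K}-{k}. ind_vec S j * beta \<alpha> \<gamma> \<Theta> k j) = (\<Sum>j\<in>S-{k}. beta \<alpha> \<gamma> \<Theta> k j)" for k
    by (rule sum.mono_neutral_cong_right) (use assms in \<open>auto simp: ind_vec_def\<close>)
  have "Rsum K (ind_vec S) \<alpha> \<gamma> \<Theta> = (\<Sum>k<K. ln (1 + ind_vec S k * beta \<alpha> \<gamma> \<Theta> k k / ((\<Sum>j\<in>S-{k}. beta \<alpha> \<gamma> \<Theta> k j) + 1/2)))"
    unfolding Rsum_def inner ..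
  also have "\<dots> = (\<Sum>k\<in>S. ln (1 + beta \<alpha> \<gamma> \<Theta> k k / ((\<Sum>j\<in>S-{k}. beta \<alpha> \<gamma> \<Theta> k j) + 1/2)))"
    by (rule sum.mono_neutral_cong_right) (use assms in \<open>auto simp: ind_vec_def\<close>)
  finally show ?thesis .
qed

lemma Sigma_rewrite:
  assumes "finite B" "finite S"
  shows "(\<Prod>k\<in>B. \<Prod>j\<in>S-{k}. f k j) = (\<Prod>p\<in>Sigma B (\<lambda>k. S-{k}). f (fst p) (snd p))"
  using prod.Sigma[of B "\<lambda>k. S-{k}" f] assms by (simp add: case_prod_unfold)

lemma Q_bound:
  assumes S: "S \<subseteq> {..<K}" and B: "B \<subseteq> S"
  shows "(\<lambda>\<Theta>. ennreal (\<Prod>k\<in>B. \<Prod>j\<in>S-{k}. exp (- beta \<alpha> \<gamma> \<Theta> k j))) \<in> borel_measurable (phase_space K)"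
    "(\<integral>\<^sup>+\<Theta>. ennreal (\<Prod>k\<in>B. \<Prod>j\<in>S-{k}. exp (- beta \<alpha> \<gamma> \<Theta> k j)) \<partial>phase_space K)
       \<le> ennreal ((3/4)^(card B * (card S - 1)))"
proof -
  have fS: "finite S" using S finite_subset by blast
  have fB: "finite B" using B fS finite_subset by blast
  define P where "P = Sigma B (\<lambda>k. S-{k})"
  have eq: "(\<Prod>k\<in>B. \<Prod>j\<in>S-{k}. exp (- beta \<alpha> \<gamma> \<Theta> k j)) = (\<Prod>p\<in>P. exp (- beta \<alpha> \<gamma> \<Theta> (fst p) (snd p)))" for \<Theta>
    unfolding P_def by (rule Sigma_rewrite[OF fB fS])
  have PO: "P \<subseteq> {p \<in> {..<K}\<times>{..<K}. fst p \<noteq> snd p}" unfolding P_def using S B by auto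
  show "(\<lambda>\<Theta>. ennreal (\<Prod>k\<in>B. \<Prod>j\<in>S-{k}. exp (- beta \<alpha> \<gamma> \<Theta> k j))) \<in> borel_measurable (phase_space K)"
    unfolding eq phase_space_def by (rule prod_meas) (use PO in auto)
  have cP: "card P = card B * (card S - 1)"
  proof -
    have "card P = (\<Sum>k\<in>B. card (S - {k}))" unfolding P_def using fB fS by simp
    also have "\<dots> = (\<Sum>k\<in>B. card S - 1)" by (intro sum.cong refl) (use B in \<open>auto simp: card_Diff_singleton\<close>)
    finally show ?thesis by simp
  qed
  show "(\<integral>\<^sup>+\<Theta>. ennreal (\<Prod>k\<in>B. \<Prod>j\<in>S-{k}. exp (- beta \<alpha> \<gamma> \<Theta> k j)) \<partial>phase_space K)
       \<le> ennreal ((3/4)^(card B * (card S - 1)))"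
    unfolding eq cP[symmetric] by (rule prod_bound[OF PO])
qed



theorem lemma3:
  fixes K s :: nat and S :: "nat set" and \<alpha> \<gamma> :: "nat \<Rightarrow> real" and r :: real
  assumes "S \<subseteq> {..<K}" and "card S = s"
    and "\<And>k. k < K \<Longrightarrow> \<alpha> k \<in> {-pi..<pi}"
    and "\<And>k. k < K \<Longrightarrow> \<gamma> k \<in> {-pi..<pi}"
  shows "measure (phase_space K) {\<Theta> \<in> space (phase_space K). Rsum K (ind_vec S) \<alpha> \<gamma> \<Theta> > r}
           \<le> exp (- (r / 32 - 1) * real s)"
proof -
  note SK = assms(1)
  have fS: "finite S" using SK finite_subset by blast
  define M where "M = phase_space K"
  define E where "E = {\<Theta> \<in> space M. Rsum K (ind_vec S) \<alpha> \<gamma> \<Theta> > r}"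
  have prob: "prob_space M" unfolding M_def phase_space_def by (rule prob_PiU)
  define bnd where "bnd = exp (- (r / 32 - 1) * real s)"
  have bnd0: "0 \<le> bnd" unfolding bnd_def by simp
  define lam where "lam = real s / 32"
  have lam0: "0 \<le> lam" unfolding lam_def by simp
  define I where "I = (\<lambda>\<Theta> k. \<Sum>j\<in>S-{k}. beta \<alpha> \<gamma> \<Theta> k j)"
  define T where "T = (\<lambda>\<Theta> k. ln (1 + beta \<alpha> \<gamma> \<Theta> k k / (I \<Theta> k + 1/2)))"
  have R: "Rsum K (ind_vec S) \<alpha> \<gamma> \<Theta> = (\<Sum>k\<in>S. T \<Theta> k)" for \<Theta>
    unfolding T_def I_def by (rule Rsum_S[OF SK])
  have I0: "0 \<le> I \<Theta> k" for \<Theta> k unfolding I_def by (intro sum_nonneg beta_bounds)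
  have T2: "T \<Theta> k \<le> 2" for \<Theta> k
  proof -
    have "T \<Theta> k \<le> 1/(I \<Theta> k + 1/2)" unfolding T_def by (rule T_bounds(2)[OF I0 beta_bounds])
    also have "\<dots> \<le> 2" using I0[of \<Theta> k] by (simp add: field_simps)
    finally show ?thesis .
  qed
  have markov: "indicator E \<Theta> \<le> ennreal (exp (lam * (Rsum K (ind_vec S) \<alpha> \<gamma> \<Theta> - r)))" for \<Theta>
  proof (cases "\<Theta> \<in> E")
    case True
    hence "0 \<le> lam * (Rsum K (ind_vec S) \<alpha> \<gamma> \<Theta> - r)" using lam0 unfolding E_def by simp
    thus ?thesis using True by simp
  qed simp
  have key: "emeasure M E \<le> ennreal bnd"
  proof (cases "E \<in> sets M")
    case False
    thus ?thesis by (simp add: emeasure_notin_sets)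
  next
    case Emeas: True
    have em: "emeasure M E = (\<integral>\<^sup>+\<Theta>. indicator E \<Theta> \<partial>M)" using Emeas by simp
    show ?thesis
    proof (cases "s \<le> 16")
      case True
      have pw: "indicator E \<Theta> \<le> ennreal bnd" for \<Theta>
      proof -
        have "Rsum K (ind_vec S) \<alpha> \<gamma> \<Theta> \<le> (\<Sum>k\<in>S. 2)" unfolding R by (intro sum_mono T2)
        also have "\<dots> = 2 * real s" using assms(2) by simp
        finally have "lam * Rsum K (ind_vec S) \<alpha> \<gamma> \<Theta> \<le> lam * (2 * real s)" by (rule mult_left_mono[OF _ lam0])
        also have "\<dots> \<le> real s"
        proof -
          have "real s * real s \<le> 16 * real s" using True by (intro mult_right_mono) auto
          thus ?thesis unfolding lam_def by simp
        qed
        finally have A: "lam * Rsum K (ind_vec S) \<alpha> \<gamma> \<Theta> \<le> real s" .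
        have B1: "lam * (Rsum K (ind_vec S) \<alpha> \<gamma> \<Theta> - r) = lam * Rsum K (ind_vec S) \<alpha> \<gamma> \<Theta> - lam * r"
          by (simp add: right_diff_distrib)
        have B2: "- (r / 32 - 1) * real s = real s - lam * r" unfolding lam_def by (simp add: algebra_simps)
        have "lam * (Rsum K (ind_vec S) \<alpha> \<gamma> \<Theta> - r) \<le> - (r / 32 - 1) * real s"
          unfolding B1 B2 using A by linarith
        hence "exp (lam * (Rsum K (ind_vec S) \<alpha> \<gamma> \<Theta> - r)) \<le> bnd" unfolding bnd_def by simp
        thus ?thesis using markov[of \<Theta>] by (meson ennreal_leI order_trans)
      qed
      have "(\<integral>\<^sup>+\<Theta>. indicator E \<Theta> \<partial>M) \<le> (\<integral>\<^sup>+\<Theta>. ennreal bnd \<partial>M)"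
        by (intro nn_integral_mono pw)
      also have "\<dots> = ennreal bnd" using prob_space.emeasure_space_1[OF prob] by simp
      finally show ?thesis using em by simp
    next
      case False
      hence s17: "17 \<le> s" by simp
      define a where "a = exp (1/4::real)"
      define C where "C = exp (3 * real s / 16)"
      define q where "q = (3/4::real)^(s-1)"
      define G where "G = (\<lambda>\<Theta> k. \<Prod>j\<in>S-{k}. exp (- beta \<alpha> \<gamma> \<Theta> k j))"
      define Q where "Q = (\<lambda>B \<Theta>. \<Prod>k\<in>B. G \<Theta> k)"
      define c where "c = (\<lambda>B. exp (- lam * r) * (C ^ card B * a ^ card (S - B)))"
      have c0: "0 \<le> c B" for B unfolding c_def a_def C_def by simp
      have G_eq: "G \<Theta> k = exp (- I \<Theta> k)" for \<Theta> k
        unfolding G_def I_def using fS by (simp add: exp_sum[symmetric] sum_negf)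
      have Q0: "0 \<le> Q B \<Theta>" for B \<Theta> unfolding Q_def G_def by (intro prod_nonneg) simp
      have pw: "indicator E \<Theta> \<le> ennreal (\<Sum>B\<in>Pow S. c B * Q B \<Theta>)" for \<Theta>
      proof -
        have "exp (lam * Rsum K (ind_vec S) \<alpha> \<gamma> \<Theta>) = (\<Prod>k\<in>S. exp (lam * T \<Theta> k))"
          unfolding R sum_distrib_left using fS by (simp add: exp_sum)
        also have "\<dots> \<le> (\<Prod>k\<in>S. C * G \<Theta> k + a)"
        proof (rule prod_mono, rule conjI)
          fix k assume "k \<in> S"
          show "0 \<le> exp (lam * T \<Theta> k)" by simp
          show "exp (lam * T \<Theta> k) \<le> C * G \<Theta> k + a"
            unfolding lam_def T_def C_def G_eq a_def
            by (rule row_bound[OF I0 beta_bounds]) simp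
        qed
        also have "\<dots> = (\<Sum>B\<in>Pow S. C ^ card B * a ^ card (S - B) * Q B \<Theta>)"
          unfolding Q_def by (rule expand[OF fS])
        finally have X: "exp (lam * Rsum K (ind_vec S) \<alpha> \<gamma> \<Theta>) \<le> (\<Sum>B\<in>Pow S. C ^ card B * a ^ card (S - B) * Q B \<Theta>)" .
        have "exp (lam * (Rsum K (ind_vec S) \<alpha> \<gamma> \<Theta> - r)) = exp (- lam * r) * exp (lam * Rsum K (ind_vec S) \<alpha> \<gamma> \<Theta>)"
          by (simp add: algebra_simps exp_add[symmetric])
        also have "\<dots> \<le> exp (- lam * r) * (\<Sum>B\<in>Pow S. C ^ card B * a ^ card (S - B) * Q B \<Theta>)"
          by (rule mult_left_mono[OF X]) simp
        also have "\<dots> = (\<Sum>B\<in>Pow S. c B * Q B \<Theta>)"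
          unfolding c_def sum_distrib_left by (simp add: algebra_simps)
        finally show ?thesis using markov[of \<Theta>] by (meson ennreal_leI order_trans)
      qed
      have Qm: "(\<lambda>\<Theta>. ennreal (Q B \<Theta>)) \<in> borel_measurable M" if "B \<in> Pow S" for B
        unfolding Q_def G_def M_def using Q_bound(1)[OF SK, of B] that by auto
      have Qb: "(\<integral>\<^sup>+\<Theta>. ennreal (Q B \<Theta>) \<partial>M) \<le> ennreal (q ^ card B)" if "B \<in> Pow S" for B
      proof -
        have "(\<integral>\<^sup>+\<Theta>. ennreal (Q B \<Theta>) \<partial>M) \<le> ennreal ((3/4)^(card B * (card S - 1)))"
          unfolding Q_def G_def M_def using Q_bound(2)[OF SK, of B] that by auto
        also have "(3/4::real)^(card B * (card S - 1)) = q ^ card B"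
          unfolding q_def assms(2) by (simp add: power_mult[symmetric] mult.commute)
        finally show ?thesis .
      qed
      have "(\<integral>\<^sup>+\<Theta>. indicator E \<Theta> \<partial>M) \<le> (\<integral>\<^sup>+\<Theta>. ennreal (\<Sum>B\<in>Pow S. c B * Q B \<Theta>) \<partial>M)"
        by (intro nn_integral_mono pw)
      also have "\<dots> = (\<integral>\<^sup>+\<Theta>. (\<Sum>B\<in>Pow S. ennreal (c B) * ennreal (Q B \<Theta>)) \<partial>M)"
        by (intro nn_integral_cong) (simp add: sum_ennreal[symmetric] c0 Q0 ennreal_mult)
      also have "\<dots> = (\<Sum>B\<in>Pow S. ennreal (c B) * (\<integral>\<^sup>+\<Theta>. ennreal (Q B \<Theta>) \<partial>M))"
        by (subst nn_integral_sum) (auto simp: nn_integral_cmult Qm intro!: borel_measurable_times_ennreal)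
      also have "\<dots> \<le> (\<Sum>B\<in>Pow S. ennreal (c B) * ennreal (q ^ card B))"
        by (intro sum_mono mult_left_mono Qb) auto
      also have "\<dots> = ennreal (\<Sum>B\<in>Pow S. c B * q ^ card B)"
        by (simp add: sum_ennreal[symmetric] c0 q_def ennreal_mult)
      also have "(\<Sum>B\<in>Pow S. c B * q ^ card B) = exp (- lam * r) * (C * q + a) ^ s"
      proof -
        have "(\<Prod>k\<in>S. C * q + a) = (\<Sum>B\<in>Pow S. C ^ card B * a ^ card (S - B) * (\<Prod>k\<in>B. q))"
          by (rule expand[OF fS])
        hence "(C * q + a) ^ s = (\<Sum>B\<in>Pow S. C ^ card B * a ^ card (S - B) * q ^ card B)"
          using assms(2) by simp
        note E2 = this
        have "(\<Sum>B\<in>Pow S. c B * q ^ card B) = exp (- lam * r) * (\<Sum>B\<in>Pow S. C ^ card B * a ^ card (S - B) * q ^ card B)"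
          unfolding c_def sum_distrib_left by (rule sum.cong[OF refl]) (simp add: algebra_simps)
        thus ?thesis using E2 by simp
      qed
      also have "exp (- lam * r) * (C * q + a) ^ s \<le> exp (- lam * r) * exp 1 ^ s"
      proof -
        have "C * q + a \<le> exp 1" unfolding C_def q_def a_def by (rule numeric[OF s17])
        moreover have "0 \<le> C * q + a" unfolding C_def q_def a_def by simp
        ultimately show ?thesis by (intro mult_left_mono power_mono) auto
      qed
      also have "exp (- lam * r) * exp 1 ^ s = bnd"
        unfolding bnd_def lam_def exp_of_nat_mult[symmetric] exp_add[symmetric]
        by (simp add: algebra_simps)
      finally have F: "(\<integral>\<^sup>+\<Theta>. indicator E \<Theta> \<partial>M) \<le> ennreal bnd" by (meson ennreal_leI)
      thus ?thesis using em by simp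
    qed
  qed
  have "measure M E \<le> bnd"
    using key prob_space.emeasure_space_1[OF prob] bnd0
    by (simp add: finite_measure.emeasure_eq_measure[OF prob_space.finite_measure[OF prob]])
  thus ?thesis unfolding M_def E_def bnd_def .
qed


end
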